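(* Let $I$ be a resident-minimal instance and $(P,X)$ a (general) prescription for $I$. Then there is a resident-changeless and hospital-complete extension $I'$ of $I$ such that $(P,Y)$, where $Y=X\setminus\mathrm{rej}(I')$, is a prescription for $I'$.
   Context: An instance $I$ consists of finite disjoint sets $R$ (residents) and $H$ (hospitals), a positive integer quota $q_h$ for each $h\in H$, for each $r\in R$ a preference list of $r$ (a sequence of distinct members of $H$, not necessarily all), and for each $h\in H$ a preference list of $h$ (a sequence of distinct members of $R$). A list is complete if it contains every member of the opposite side; an instance is hospital-complete if every hospital's list is complete. A match is a pair $(r,h)\in R\times H$. For a set $M$ of matches, $\mathrm{res}_h M=\{r:(r,h)\in M\}$, $\mathrm{res}\,M=\{r:(r,h)\in M\text{ for some }h\}$. $J$ is an extension of $I$ (same $R,H$, quotas) if every list of $J$ has the corresponding list of $I$ as a prefix; it is resident-changeless if every resident's list is the same in $I$ and $J$. An event is $(r,h)^+$ (proposal) or $(r,h)^-$ (rejection). For an event sequence $\sigma$, $\mathrm{prop}(\sigma)$, $\mathrm{rej}(\sigma)$ are the sets of matches proposed/rejected in $\sigma$, $\mathrm{tent}(\sigma)=\mathrm{prop}(\sigma)\setminus\mathrm{rej}(\sigma)$, and $\mathrm{pend}_I(\sigma)$ is the set of $(r,h)\in\mathrm{tent}(\sigma)$ with $r$ not on the list of $h$ in $I$. A match $(r,h)\in M$ is ousted from $M$ in $I$ if the list of $h$ in $I$ contains at least $q_h$ residents of $\mathrm{res}_h M$ and either $r$ is not on it or $r$ is preceded on it by at least $q_h$ residents of $\mathrm{res}_h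 M$. $I$-feasible sequences: the empty sequence is $I$-feasible; if $\sigma$ is $I$-feasible then $\sigma+(r,h)^+$ is $I$-feasible if $r\notin\mathrm{res}\,\mathrm{tent}(\sigma)$, $(r,h)\notin\mathrm{prop}(\sigma)$, $h$ is on the list of $r$ in $I$ and $(r,h')\in\mathrm{rej}(\sigma)$ for every $h'$ preceding $h$ on it; and $\sigma+(r,h)^-$ is $I$-feasible if $(r,h)$ is ousted from $\mathrm{prop}(\sigma)$ in $I$ and $(r,h)\notin\mathrm{rej}(\sigma)$. All maximal $I$-feasible sequences contain the same events; $\mathrm{prop}(I),\mathrm{rej}(I),\mathrm{tent}(I),\mathrm{pend}(I)$ denote $\mathrm{prop}(\sigma),\mathrm{rej}(\sigma),\mathrm{tent}(\sigma),\mathrm{pend}_I(\sigma)$ for any maximal $I$-feasible $\sigma$. $I$ is resident-minimal if $\mathrm{prop}(I)$ equals the set of matches $(r,h)$ with $h$ on the list of $r$ in $I$. For a resident-minimal instance $I$, a (general) prescription for $I$ is a pair $(P,X)$ of sets of matches such that: (P1) $P\cap\mathrm{prop}(I)=\emptyset$; (P2) for each $r\in R$ there is at most one $h$ with $(r,h)\in P$; (P3) $X\subseteq\mathrm{tent}(I)$; (P4) $\mathrm{res}\,P\cap\mathrm{res}\,\mathrm{tent}(I)\subseteq\mathrm{res}\,X$; (P5) for each $h$, $|\mathrm{res}_h(P\cup(\mathrm{tent}(I)\setminus X))|\le q_h$, with equality if $\mathrm{res}_h X\ne\emptyset$; (P6') for each $h$, every member of $\mathrm{res}_h(P\cup((\mathrm{tent}(I)\setminus\mathrm{pend}(I))\setminus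 X))$ precedes all members of $\mathrm{res}_h(X\setminus\mathrm{pend}(I))$ in the list of $h$ in $I$, and if $\mathrm{res}_h(X\setminus\mathrm{pend}(I))\ne\emptyset$ then $\mathrm{res}_h\,\mathrm{pend}(I)\subseteq\mathrm{res}_h X$. When $I$ is hospital-complete (so $\mathrm{pend}(I)=\emptyset$), a prescription for $I$ is such a pair with (P6') read as (P6): every member of $\mathrm{res}_h(P\cup(\mathrm{tent}(I)\setminus X))$ precedes all members of $\mathrm{res}_h X$ in the list of $h$ in $I$. *)

theory Defs
  imports Main "HOL-Library.Sublist"
begin

text \<open>Residents have type 'r, hospitals type 'h (so R and H are disjoint).
  A match is a pair (r,h).\<close>

record ('r, 'h) inst =
  Rs :: "'r set"
  Hs :: "'h set"
  quota :: "'h \<Rightarrow> nat"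
  rpref :: "'r \<Rightarrow> 'h list"
  hpref :: "'h \<Rightarrow> 'r list"

definition valid_inst :: "('r, 'h) inst \<Rightarrow> bool" where
  "valid_inst I \<longleftrightarrow> finite (Rs I) \<and> finite (Hs I)
     \<and> (\<forall>h\<in>Hs I. quota I h > 0)
     \<and> (\<forall>r\<in>Rs I. distinct (rpref I r) \<and> set (rpref I r) \<subseteq> Hs I)
     \<and> (\<forall>h\<in>Hs I. distinct (hpref I h) \<and> set (hpref I h) \<subseteq> Rs I)
     \<and> (\<forall>r. r \<notin> Rs I \<longrightarrow> rpref I r = [])
     \<and> (\<forall>h. h \<notin> Hs I \<longrightarrow> hpref I h = [])"

definition precedes :: "'a list \<Rightarrow> 'a \<Rightarrow> 'a \<Rightarrow> bool" where
  "precedes xs a b \<longleftrightarrow> (\<exists>i j. i < j \<and> j < length xs \<and> xs ! i = a \<and> xs ! j = b)"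

definition res_h :: "'h \<Rightarrow> ('r \<times> 'h) set \<Rightarrow> 'r set" where
  "res_h h M = {r. (r, h) \<in> M}"

definition res :: "('r \<times> 'h) set \<Rightarrow> 'r set" where
  "res M = {r. \<exists>h. (r, h) \<in> M}"

datatype ('r, 'h) event = Prop 'r 'h | Rej 'r 'h

definition props :: "('r, 'h) event list \<Rightarrow> ('r \<times> 'h) set" where
  "props \<sigma> = {(r, h). Prop r h \<in> set \<sigma>}"

definition rejs :: "('r, 'h) event list \<Rightarrow> ('r \<times> 'h) set" where
  "rejs \<sigma> = {(r, h). Rej r h \<in> set \<sigma>}"

definition tents :: "('r, 'h) event list \<Rightarrow> ('r \<times> 'h) set" where
  "tents \<sigma> = props \<sigma> - rejs \<sigma>"

definition pends :: "('r, 'h) inst \<Rightarrow> ('r, 'h) event list \<Rightarrow> ('r \<times> 'h) set" where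
  "pends I \<sigma> = {(r, h) \<in> tents \<sigma>. r \<notin> set (hpref I h)}"

definition ousted :: "('r, 'h) inst \<Rightarrow> ('r \<times> 'h) \<Rightarrow> ('r \<times> 'h) set \<Rightarrow> bool" where
  "ousted I m M \<longleftrightarrow> (case m of (r, h) \<Rightarrow>
     m \<in> M
     \<and> card (set (hpref I h) \<inter> res_h h M) \<ge> quota I h
     \<and> (r \<notin> set (hpref I h)
        \<or> card {r' \<in> res_h h M. precedes (hpref I h) r' r} \<ge> quota I h))"

inductive feasible :: "('r, 'h) inst \<Rightarrow> ('r, 'h) event list \<Rightarrow> bool" for I where
  feas_Nil: "feasible I []"
| feas_Prop: "\<lbrakk> feasible I \<sigma>; r \<notin> res (tents \<sigma>); (r, h) \<notin> props \<sigma>;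
     h \<in> set (rpref I r);
     \<forall>h'. precedes (rpref I r) h' h \<longrightarrow> (r, h') \<in> rejs \<sigma> \<rbrakk>
   \<Longrightarrow> feasible I (\<sigma> @ [Prop r h])"
| feas_Rej: "\<lbrakk> feasible I \<sigma>; ousted I (r, h) (props \<sigma>); (r, h) \<notin> rejs \<sigma> \<rbrakk>
   \<Longrightarrow> feasible I (\<sigma> @ [Rej r h])"

definition maximal_feasible :: "('r, 'h) inst \<Rightarrow> ('r, 'h) event list \<Rightarrow> bool" where
  "maximal_feasible I \<sigma> \<longleftrightarrow> feasible I \<sigma> \<and> \<not> (\<exists>e. feasible I (\<sigma> @ [e]))"

text \<open>prop(I), rej(I), tent(I), pend(I): evaluated at (any) maximal I-feasible sequence.\<close>
definition some_max :: "('r, 'h) inst \<Rightarrow> ('r, 'h) event list" where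
  "some_max I = (SOME \<sigma>. maximal_feasible I \<sigma>)"

definition propI :: "('r, 'h) inst \<Rightarrow> ('r \<times> 'h) set" where
  "propI I = props (some_max I)"

definition rejI :: "('r, 'h) inst \<Rightarrow> ('r \<times> 'h) set" where
  "rejI I = rejs (some_max I)"

definition tentI :: "('r, 'h) inst \<Rightarrow> ('r \<times> 'h) set" where
  "tentI I = tents (some_max I)"

definition pendI :: "('r, 'h) inst \<Rightarrow> ('r \<times> 'h) set" where
  "pendI I = pends I (some_max I)"

definition resident_minimal :: "('r, 'h) inst \<Rightarrow> bool" where
  "resident_minimal I \<longleftrightarrow> propI I = {(r, h). h \<in> set (rpref I r)}"

definition hospital_complete :: "('r, 'h) inst \<Rightarrow> bool" where
  "hospital_complete I \<longleftrightarrow> (\<forall>h\<in>Hs I. set (hpref I h) = Rs I)"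

definition extension :: "('r, 'h) inst \<Rightarrow> ('r, 'h) inst \<Rightarrow> bool" where
  "extension I J \<longleftrightarrow> Rs J = Rs I \<and> Hs J = Hs I
     \<and> (\<forall>h\<in>Hs I. quota J h = quota I h)
     \<and> (\<forall>r\<in>Rs I. prefix (rpref I r) (rpref J r))
     \<and> (\<forall>h\<in>Hs I. prefix (hpref I h) (hpref J h))"

definition resident_changeless :: "('r, 'h) inst \<Rightarrow> ('r, 'h) inst \<Rightarrow> bool" where
  "resident_changeless I J \<longleftrightarrow> (\<forall>r\<in>Rs I. rpref J r = rpref I r)"

text \<open>Conditions (P1)-(P5), shared by both notions of prescription.\<close>
definition presc_base :: "('r, 'h) inst \<Rightarrow> ('r \<times> 'h) set \<Rightarrow> ('r \<times> 'h) set \<Rightarrow> bool" where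
  "presc_base I P X \<longleftrightarrow>
     P \<subseteq> Rs I \<times> Hs I \<and> X \<subseteq> Rs I \<times> Hs I
   \<and> P \<inter> propI I = {}
   \<and> (\<forall>r h h'. (r, h) \<in> P \<longrightarrow> (r, h') \<in> P \<longrightarrow> h = h')
   \<and> X \<subseteq> tentI I
   \<and> res P \<inter> res (tentI I) \<subseteq> res X
   \<and> (\<forall>h\<in>Hs I. card (res_h h (P \<union> (tentI I - X))) \<le> quota I h
        \<and> (res_h h X \<noteq> {} \<longrightarrow> card (res_h h (P \<union> (tentI I - X))) = quota I h))"

definition gen_prescription :: "('r, 'h) inst \<Rightarrow> ('r \<times> 'h) set \<Rightarrow> ('r \<times> 'h) set \<Rightarrow> bool" where
  "gen_prescription I P X \<longleftrightarrow> resident_minimal I \<and> presc_base I P X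
   \<and> (\<forall>h\<in>Hs I.
        (\<forall>a\<in>res_h h (P \<union> ((tentI I - pendI I) - X)). \<forall>b\<in>res_h h (X - pendI I).
            precedes (hpref I h) a b)
      \<and> (res_h h (X - pendI I) \<noteq> {} \<longrightarrow> res_h h (pendI I) \<subseteq> res_h h X))"

text \<open>Prescription for a hospital-complete resident-minimal instance (with (P6)).\<close>
definition prescription :: "('r, 'h) inst \<Rightarrow> ('r \<times> 'h) set \<Rightarrow> ('r \<times> 'h) set \<Rightarrow> bool" where
  "prescription I P X \<longleftrightarrow> resident_minimal I \<and> hospital_complete I \<and> presc_base I P X
   \<and> (\<forall>h\<in>Hs I. \<forall>a\<in>res_h h (P \<union> (tentI I - X)). \<forall>b\<in>res_h h X.
        precedes (hpref I h) a b)"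

end

theory Submission
  imports Defs
begin


lemma prec_mem: "precedes xs a b \<Longrightarrow> a \<in> set xs \<and> b \<in> set xs"
  unfolding precedes_def by auto

lemma prec_app_left: "precedes xs a b \<Longrightarrow> precedes (xs@ys) a b"
proof -
  assume "precedes xs a b"
  then obtain i j where "i < j" "j < length xs" "xs!i = a" "xs!j = b" unfolding precedes_def by blast
  then show ?thesis unfolding precedes_def
    by (intro exI[of _ i] exI[of _ j]) (auto simp: nth_append)
qed

lemma prec_app_cross: "a \<in> set xs \<Longrightarrow> b \<in> set ys \<Longrightarrow> precedes (xs@ys) a b"
proof -
  assume "a \<in> set xs" "b \<in> set ys"
  then obtain i j where "i < length xs" "xs!i = a" "j < length ys" "ys!j = b"
    by (auto simp: in_set_conv_nth)
  then show ?thesis unfolding precedes_def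
    by (intro exI[of _ i] exI[of _ "length xs + j"]) (auto simp: nth_append)
qed

lemma prec_total: "a \<in> set xs \<Longrightarrow> b \<in> set xs \<Longrightarrow> a \<noteq> b \<Longrightarrow> precedes xs a b \<or> precedes xs b a"
proof -
  assume "a \<in> set xs" "b \<in> set xs" "a \<noteq> b"
  then obtain i j where ij: "i < length xs" "xs!i = a" "j < length xs" "xs!j = b"
    by (auto simp: in_set_conv_nth)
  then have "i \<noteq> j" using \<open>a \<noteq> b\<close> by auto
  then have "i < j \<or> j < i" by arith
  then show ?thesis
  proof
    assume "i < j" then show ?thesis using ij unfolding precedes_def by blast
  next
    assume "j < i" then show ?thesis using ij unfolding precedes_def by blast
  qed
qed

lemma prec_idx: "distinct xs \<Longrightarrow> i < length xs \<Longrightarrow> j < length xs \<Longrightarrow> xs!i = xs!j \<Longrightarrow> i = j"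
  by (simp add: nth_eq_iff_index_eq)

lemma prec_antisym: "distinct xs \<Longrightarrow> precedes xs a b \<Longrightarrow> precedes xs b a \<Longrightarrow> False"
proof -
  assume d: "distinct xs" and p1: "precedes xs a b" and p2: "precedes xs b a"
  from p1 obtain i j where 1: "i < j" "j < length xs" "xs!i = a" "xs!j = b" unfolding precedes_def by blast
  from p2 obtain i' j' where 2: "i' < j'" "j' < length xs" "xs!i' = b" "xs!j' = a" unfolding precedes_def by blast
  have "i = j'" using prec_idx[OF d, of i j'] 1 2 by simp
  moreover have "j = i'" using prec_idx[OF d, of j i'] 1 2 by simp
  ultimately show False using 1 2 by simp
qed

lemma prec_irrefl: "distinct xs \<Longrightarrow> \<not> precedes xs a a"
proof
  assume d: "distinct xs" and p1: "precedes xs a a"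
  from p1 obtain i j where 1: "i < j" "j < length xs" "xs!i = a" "xs!j = a" unfolding precedes_def by blast
  have "i = j" using prec_idx[OF d, of i j] 1 by simp
  then show False using 1 by simp
qed

lemma prec_app_left_iff: "distinct (xs@ys) \<Longrightarrow> b \<in> set xs \<Longrightarrow> precedes (xs@ys) a b \<longleftrightarrow> precedes xs a b"
proof
  assume d: "distinct (xs@ys)" and b: "b \<in> set xs" and p: "precedes (xs@ys) a b"
  from b obtain k where k: "k < length xs" "xs!k = b" by (auto simp: in_set_conv_nth)
  from p obtain i j where ij: "i < j" "j < length (xs@ys)" "(xs@ys)!i = a" "(xs@ys)!j = b"
    unfolding precedes_def by blast
  have k2: "(xs@ys)!k = b" "k < length (xs@ys)" using k by (auto simp: nth_append)
  have "j = k" using prec_idx[OF d, of j k] ij k2 by simp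
  then show "precedes xs a b" using ij k unfolding precedes_def
    by (intro exI[of _ i] exI[of _ j]) (auto simp: nth_append)
qed (rule prec_app_left)

lemma props_simps[simp]: "props [] = {}" "props (\<sigma> @ [Prop r h]) = insert (r,h) (props \<sigma>)"
  "props (\<sigma> @ [Rej r h]) = props \<sigma>"
  by (auto simp: props_def)

lemma rejs_simps[simp]: "rejs [] = {}" "rejs (\<sigma> @ [Rej r h]) = insert (r,h) (rejs \<sigma>)"
  "rejs (\<sigma> @ [Prop r h]) = rejs \<sigma>"
  by (auto simp: rejs_def)

definition AJ :: "('r, 'h) inst \<Rightarrow> ('r \<times> 'h) set" where
  "AJ J = {(r,h). h \<in> set (rpref J r)}"

lemma feas_props: "feasible J \<sigma> \<Longrightarrow> props \<sigma> \<subseteq> AJ J"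
  by (induction rule: feasible.induct) (auto simp: AJ_def)

lemma ousted_in: "ousted J m M \<Longrightarrow> m \<in> M"
  unfolding ousted_def by (auto split: prod.splits)

lemma feas_rejs_props: "feasible J \<sigma> \<Longrightarrow> rejs \<sigma> \<subseteq> props \<sigma>"
  by (induction rule: feasible.induct) (auto dest: ousted_in)

lemma ousted_mono: "ousted J m M \<Longrightarrow> M \<subseteq> M' \<Longrightarrow> ousted J m M'"
proof -
  assume o: "ousted J m M" and s: "M \<subseteq> M'"
  obtain r h where m: "m = (r,h)" by (cases m)
  have rs: "res_h h M \<subseteq> res_h h M'" using s by (auto simp: res_h_def)
  have c1: "card (set (hpref J h) \<inter> res_h h M) \<le> card (set (hpref J h) \<inter> res_h h M')"
    by (rule card_mono) (use rs in auto)
  have c2: "card {r' \<in> res_h h M. precedes (hpref J h) r' r} \<le> card {r' \<in> res_h h M'. precedes (hpref J h) r' r}"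
    by (rule card_mono, rule finite_subset[of _ "set (hpref J h)"]) (use rs in \<open>auto dest: prec_mem\<close>)
  show ?thesis using o s c1 c2 unfolding ousted_def m by auto
qed

lemma feas_rej_ousted: "feasible J \<sigma> \<Longrightarrow> m \<in> rejs \<sigma> \<Longrightarrow> ousted J m (props \<sigma>)"
proof (induction rule: feasible.induct)
  case (feas_Prop \<sigma> r h)
  then have "ousted J m (props \<sigma>)" by simp
  then show ?case by (rule ousted_mono) auto
qed auto

lemma feas_prec_rej: "feasible J \<sigma> \<Longrightarrow> (r,h) \<in> props \<sigma> \<Longrightarrow> precedes (rpref J r) h' h \<Longrightarrow> (r,h') \<in> rejs \<sigma>"
  by (induction rule: feasible.induct) auto

lemma feas_tent_unique: "feasible J \<sigma> \<Longrightarrow> (r,h1) \<in> tents \<sigma> \<Longrightarrow> (r,h2) \<in> tents \<sigma> \<Longrightarrow> h1 = h2"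
proof (induction arbitrary: h1 h2 rule: feasible.induct)
  case (feas_Prop \<sigma> r' h)
  have "rejs \<sigma> \<subseteq> props \<sigma>" using feas_Prop.hyps(1) by (rule feas_rejs_props)
  then show ?case using feas_Prop by (auto simp: tents_def res_def)
qed (auto simp: tents_def)

lemma feas_distinct: "feasible J \<sigma> \<Longrightarrow> distinct \<sigma>"
  by (induction rule: feasible.induct) (auto simp: props_def rejs_def)

definition EJ :: "('r, 'h) inst \<Rightarrow> ('r, 'h) event set" where
  "EJ J = (\<lambda>(r,h). Prop r h) ` AJ J \<union> (\<lambda>(r,h). Rej r h) ` AJ J"

lemma feas_set: "feasible J \<sigma> \<Longrightarrow> set \<sigma> \<subseteq> EJ J"
proof
  fix e assume f: "feasible J \<sigma>" and e: "e \<in> set \<sigma>"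
  have pA: "props \<sigma> \<subseteq> AJ J" using f by (rule feas_props)
  have rp: "rejs \<sigma> \<subseteq> props \<sigma>" using f by (rule feas_rejs_props)
  show "e \<in> EJ J"
  proof (cases e)
    case (Prop r h)
    then have "(r,h) \<in> AJ J" using e pA by (auto simp: props_def)
    then show ?thesis using Prop unfolding EJ_def by force
  next
    case (Rej r h)
    then have "(r,h) \<in> AJ J" using e pA rp by (auto simp: rejs_def)
    then show ?thesis using Rej unfolding EJ_def by force
  qed
qed

lemma exists_max: assumes "finite (AJ J)" shows "\<exists>\<tau>. maximal_feasible J \<tau>"
proof -
  have fE: "finite (EJ J)" using assms unfolding EJ_def by auto
  have bnd: "\<forall>n. (\<exists>\<sigma>. feasible J \<sigma> \<and> length \<sigma> = n) \<longrightarrow> n \<le> card (EJ J)"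
  proof (intro allI impI)
    fix n assume "\<exists>\<sigma>. feasible J \<sigma> \<and> length \<sigma> = n"
    then obtain \<sigma> where "feasible J \<sigma>" "length \<sigma> = n" by blast
    then show "n \<le> card (EJ J)" using feas_set[of J \<sigma>] feas_distinct[of J \<sigma>] fE
      by (metis card_mono distinct_card)
  qed
  have h0: "\<exists>\<sigma>. feasible J \<sigma> \<and> length \<sigma> = 0" using feasible.feas_Nil by auto
  have bnd': "\<forall>n. (\<exists>\<sigma>. feasible J \<sigma> \<and> length \<sigma> = n) \<longrightarrow> (\<lambda>n. n) n < Suc (card (EJ J))"
    using bnd by auto
  from ex_has_greatest_nat[of _ 0 "\<lambda>n. n", OF h0 bnd'] obtain n where
    n: "\<exists>\<sigma>. feasible J \<sigma> \<and> length \<sigma> = n" "\<forall>y. (\<exists>\<sigma>. feasible J \<sigma> \<and> length \<sigma> = y) \<longrightarrow> y \<le> n"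
    by blast
  then obtain \<sigma> where s: "feasible J \<sigma>" "length \<sigma> = n" by blast
  have "\<not> (\<exists>e. feasible J (\<sigma> @ [e]))"
  proof
    assume "\<exists>e. feasible J (\<sigma> @ [e])"
    then obtain e where "feasible J (\<sigma> @ [e])" by blast
    then show False using n(2) s(2) by (metis Suc_n_not_le_n length_append_singleton)
  qed
  then show ?thesis using s unfolding maximal_feasible_def by blast
qed

lemma some_max_max: "finite (AJ J) \<Longrightarrow> maximal_feasible J (some_max J)"
  unfolding some_max_def using exists_max by (metis someI_ex)

lemma main_sub: "feasible J \<sigma> \<Longrightarrow> maximal_feasible J \<tau> \<Longrightarrow> set \<sigma> \<subseteq> set \<tau>"
proof (induction rule: feasible.induct)
  case feas_Nil
  then show ?case by simp
next
  case (feas_Prop \<sigma> r h)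
  have ft: "feasible J \<tau>" and nm: "\<And>e. \<not> feasible J (\<tau> @ [e])"
    using feas_Prop.prems unfolding maximal_feasible_def by auto
  have sub: "set \<sigma> \<subseteq> set \<tau>" using feas_Prop.IH feas_Prop.prems by blast
  have rs: "rejs \<sigma> \<subseteq> rejs \<tau>" using sub by (auto simp: rejs_def)
  have rp: "rejs \<tau> \<subseteq> props \<tau>" using ft by (rule feas_rejs_props)
  have "(r,h) \<in> props \<tau>"
  proof (rule ccontr)
    assume np: "(r,h) \<notin> props \<tau>"
    have "r \<notin> res (tents \<tau>)"
    proof
      assume "r \<in> res (tents \<tau>)"
      then obtain h' where t: "(r,h') \<in> tents \<tau>" by (auto simp: res_def)
      then have ph': "(r,h') \<in> props \<tau>" "(r,h') \<notin> rejs \<tau>" by (auto simp: tents_def)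
      then have "h' \<in> set (rpref J r)" using feas_props[OF ft] by (auto simp: AJ_def)
      moreover have "h \<noteq> h'" using np ph' by auto
      ultimately have "precedes (rpref J r) h h' \<or> precedes (rpref J r) h' h"
        using prec_total feas_Prop.hyps(4) by metis
      then show False
      proof
        assume "precedes (rpref J r) h h'"
        then have "(r,h) \<in> rejs \<tau>" using feas_prec_rej[OF ft ph'(1)] by blast
        then show False using np rp by auto
      next
        assume "precedes (rpref J r) h' h"
        then have "(r,h') \<in> rejs \<sigma>" using feas_Prop.hyps(5) by blast
        then show False using rs ph' by auto
      qed
    qed
    then have "feasible J (\<tau> @ [Prop r h])"
      by (rule feasible.feas_Prop[OF ft _ np feas_Prop.hyps(4)]) (use rs feas_Prop.hyps(5) in blast)
    then show False using nm by blast
  qed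
  then show ?case using sub by (auto simp: props_def)
next
  case (feas_Rej \<sigma> r h)
  have ft: "feasible J \<tau>" and nm: "\<And>e. \<not> feasible J (\<tau> @ [e])"
    using feas_Rej.prems unfolding maximal_feasible_def by auto
  have sub: "set \<sigma> \<subseteq> set \<tau>" using feas_Rej.IH feas_Rej.prems by blast
  have "props \<sigma> \<subseteq> props \<tau>" using sub by (auto simp: props_def)
  then have o: "ousted J (r,h) (props \<tau>)" using ousted_mono feas_Rej.hyps(2) by blast
  have "(r,h) \<in> rejs \<tau>"
  proof (rule ccontr)
    assume "(r,h) \<notin> rejs \<tau>"
    then have "feasible J (\<tau> @ [Rej r h])" by (rule feasible.feas_Rej[OF ft o])
    then show False using nm by blast
  qed
  then show ?case using sub by (auto simp: rejs_def)
qed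

lemma rejs_max: assumes "maximal_feasible J \<tau>" "props \<tau> = AJ J"
  shows "rejs \<tau> = {m. ousted J m (AJ J)}"
proof
  have ft: "feasible J \<tau>" and nm: "\<And>e. \<not> feasible J (\<tau> @ [e])"
    using assms unfolding maximal_feasible_def by auto
  show "rejs \<tau> \<subseteq> {m. ousted J m (AJ J)}" using feas_rej_ousted[OF ft] assms(2) by auto
  show "{m. ousted J m (AJ J)} \<subseteq> rejs \<tau>"
  proof
    fix m assume "m \<in> {m. ousted J m (AJ J)}"
    then obtain r h where m: "m = (r,h)" "ousted J (r,h) (props \<tau>)" using assms(2) by (cases m) auto
    show "m \<in> rejs \<tau>"
    proof (rule ccontr)
      assume "m \<notin> rejs \<tau>"
      then have "feasible J (\<tau> @ [Rej r h])" using m by (intro feasible.feas_Rej[OF ft]) auto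
      then show False using nm by blast
    qed
  qed
qed

lemma valid_rpref: "valid_inst J \<Longrightarrow> h \<in> set (rpref J r) \<Longrightarrow> r \<in> Rs J \<and> h \<in> Hs J"
proof -
  assume v: "valid_inst J" and h: "h \<in> set (rpref J r)"
  have a: "\<forall>r. r \<notin> Rs J \<longrightarrow> rpref J r = []" and b: "\<forall>r\<in>Rs J. set (rpref J r) \<subseteq> Hs J"
    using v unfolding valid_inst_def by auto
  show ?thesis using a b h by (metis empty_iff empty_set subsetD)
qed

lemma AJ_sub: "valid_inst J \<Longrightarrow> AJ J \<subseteq> Rs J \<times> Hs J"
  unfolding AJ_def using valid_rpref by fast

lemma finite_AJ: "valid_inst J \<Longrightarrow> finite (AJ J)"
proof -
  assume v: "valid_inst J"
  have "finite (Rs J \<times> Hs J)" using v unfolding valid_inst_def by auto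
  then show ?thesis using AJ_sub[OF v] by (rule finite_subset[rotated])
qed


definition lst :: "'a set \<Rightarrow> 'a list" where
  "lst S = (SOME xs. distinct xs \<and> set xs = S)"

lemma lst: "finite S \<Longrightarrow> distinct (lst S) \<and> set (lst S) = S"
  unfolding lst_def by (rule someI_ex) (metis finite_distinct_list)

definition S1 :: "('r, 'h) inst \<Rightarrow> ('r \<times> 'h) set \<Rightarrow> ('r \<times> 'h) set \<Rightarrow> 'h \<Rightarrow> 'r set" where
  "S1 I P X h = ((res_h h P \<union> (res_h h (tentI I) - res_h h X)) \<inter> Rs I) - set (hpref I h)"

definition S3 :: "('r, 'h) inst \<Rightarrow> ('r \<times> 'h) set \<Rightarrow> ('r \<times> 'h) set \<Rightarrow> 'h \<Rightarrow> 'r set" where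
  "S3 I P X h = Rs I - set (hpref I h) - S1 I P X h"

definition NP :: "('r, 'h) inst \<Rightarrow> ('r \<times> 'h) set \<Rightarrow> ('r \<times> 'h) set \<Rightarrow> 'h \<Rightarrow> 'r list" where
  "NP I P X h = (if h \<in> Hs I then hpref I h @ lst (S1 I P X h) @ lst (S3 I P X h) else [])"

definition newI :: "('r, 'h) inst \<Rightarrow> ('r \<times> 'h) set \<Rightarrow> ('r \<times> 'h) set \<Rightarrow> ('r, 'h) inst" where
  "newI I P X = I\<lparr>hpref := NP I P X\<rparr>"

lemma newI_simps[simp]: "Rs (newI I P X) = Rs I" "Hs (newI I P X) = Hs I"
  "quota (newI I P X) = quota I" "rpref (newI I P X) = rpref I" "hpref (newI I P X) = NP I P X"
  by (auto simp: newI_def)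

lemma AJ_newI[simp]: "AJ (newI I P X) = AJ I" by (simp add: AJ_def)

lemma NP_facts:
  assumes v: "valid_inst I" and h: "h \<in> Hs I"
  shows "NP I P X h = hpref I h @ lst (S1 I P X h) @ lst (S3 I P X h)"
    "distinct (NP I P X h)" "set (NP I P X h) = Rs I"
    "set (lst (S1 I P X h)) = S1 I P X h" "set (lst (S3 I P X h)) = S3 I P X h"
    "set (hpref I h) \<subseteq> Rs I" "distinct (hpref I h)"
proof -
  have fR: "finite (Rs I)" and dL: "distinct (hpref I h)" and sL: "set (hpref I h) \<subseteq> Rs I"
    using v h unfolding valid_inst_def by auto
  have f1: "finite (S1 I P X h)" using fR unfolding S1_def by auto
  have f3: "finite (S3 I P X h)" using fR unfolding S3_def by auto
  note l1 = lst[OF f1] and l3 = lst[OF f3]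
  show e: "NP I P X h = hpref I h @ lst (S1 I P X h) @ lst (S3 I P X h)" using h by (simp add: NP_def)
  show "set (lst (S1 I P X h)) = S1 I P X h" "set (lst (S3 I P X h)) = S3 I P X h"
    "set (hpref I h) \<subseteq> Rs I" "distinct (hpref I h)" using l1 l3 sL dL by auto
  show "distinct (NP I P X h)" unfolding e using l1 l3 dL by (auto simp: S1_def S3_def)
  show "set (NP I P X h) = Rs I" unfolding e using l1 l3 sL by (auto simp: S1_def S3_def)
qed

lemma valid_newI: "valid_inst I \<Longrightarrow> valid_inst (newI I P X)"
proof -
  assume v: "valid_inst I"
  have "\<forall>h\<in>Hs I. distinct (NP I P X h) \<and> set (NP I P X h) \<subseteq> Rs I" using NP_facts[OF v] by auto
  moreover have "\<forall>h. h \<notin> Hs I \<longrightarrow> NP I P X h = []" by (simp add: NP_def)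
  ultimately show ?thesis using v unfolding valid_inst_def by simp
qed

lemma ousted_transfer:
  assumes v: "valid_inst I" and o: "ousted I m M" and MA: "M \<subseteq> AJ I"
  shows "ousted (newI I P X) m M"
proof -
  obtain r h where m: "m = (r,h)" by (cases m)
  have rM: "(r,h) \<in> M" using o m ousted_in by blast
  then have rh: "r \<in> Rs I" "h \<in> Hs I" using MA AJ_sub[OF v] by auto
  note F = NP_facts[OF v rh(2)]
  let ?L = "hpref I h" and ?R = "lst (S1 I P X h) @ lst (S3 I P X h)" and ?Mh = "res_h h M"
  have e: "hpref (newI I P X) h = ?L @ ?R" using F by simp
  have q: "card (set ?L \<inter> ?Mh) \<ge> quota I h"
    and alt: "r \<notin> set ?L \<or> card {r' \<in> ?Mh. precedes ?L r' r} \<ge> quota I h"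
    using o m unfolding ousted_def by auto
  have c1: "card (set ?L \<inter> ?Mh) \<le> card (set (?L @ ?R) \<inter> ?Mh)"
    by (rule card_mono) auto
  have c2: "card {r' \<in> ?Mh. precedes (?L @ ?R) r' r} \<ge> quota I h"
  proof (cases "r \<in> set ?L")
    case True
    then have c: "card {r' \<in> ?Mh. precedes ?L r' r} \<ge> quota I h" using alt by auto
    have "card {r' \<in> ?Mh. precedes ?L r' r} \<le> card {r' \<in> ?Mh. precedes (?L @ ?R) r' r}"
      by (rule card_mono, rule finite_subset[of _ "set (?L @ ?R)"]) (auto dest: prec_mem prec_app_left)
    then show ?thesis using c by simp
  next
    case False
    then have "r \<in> set ?R" using rh(1) F(4,5) unfolding S3_def by auto
    then have "set ?L \<inter> ?Mh \<subseteq> {r' \<in> ?Mh. precedes (?L @ ?R) r' r}" using prec_app_cross by fast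
    moreover have "finite {r' \<in> ?Mh. precedes (?L @ ?R) r' r}"
      by (rule finite_subset[of _ "set (?L @ ?R)"]) (auto dest: prec_mem)
    ultimately have "card (set ?L \<inter> ?Mh) \<le> card {r' \<in> ?Mh. precedes (?L @ ?R) r' r}"
      by (simp add: card_mono)
    then show ?thesis using q by simp
  qed
  show ?thesis unfolding m ousted_def using rM q c1 c2 by (simp add: F(1))
qed

lemma feas_transfer: "feasible I \<sigma> \<Longrightarrow> valid_inst I \<Longrightarrow> feasible (newI I P X) \<sigma>"
proof (induction rule: feasible.induct)
  case feas_Nil
  show ?case by (rule feasible.feas_Nil)
next
  case (feas_Prop \<sigma> r h)
  then show ?case by (intro feasible.feas_Prop) auto
next
  case (feas_Rej \<sigma> r h)
  have "ousted (newI I P X) (r,h) (props \<sigma>)"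
    by (rule ousted_transfer[OF feas_Rej.prems feas_Rej.hyps(2) feas_props[OF feas_Rej.hyps(1)]])
  then show ?case using feas_Rej by (intro feasible.feas_Rej) auto
qed



theorem lemma4:
  fixes I :: "('r, 'h) inst" and P X :: "('r \<times> 'h) set"
  assumes "valid_inst I"
    and "resident_minimal I"
    and "gen_prescription I P X"
  shows "\<exists>I'. valid_inst I' \<and> extension I I' \<and> resident_changeless I I'
           \<and> hospital_complete I' \<and> prescription I' P (X - rejI I')"
proof -
  note v = assms(1)
  define A where "A = AJ I"
  have rm: "propI I = A" using assms(2) unfolding resident_minimal_def AJ_def A_def by simp
  have pb: "presc_base I P X" using assms(3) unfolding gen_prescription_def by auto
  have p6a: "\<And>h a b. h \<in> Hs I \<Longrightarrow> a \<in> res_h h (P \<union> ((tentI I - pendI I) - X)) \<Longrightarrow>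
      b \<in> res_h h (X - pendI I) \<Longrightarrow> precedes (hpref I h) a b"
    using assms(3) unfolding gen_prescription_def by blast
  have p6b: "\<And>h. h \<in> Hs I \<Longrightarrow> res_h h (X - pendI I) \<noteq> {} \<Longrightarrow> res_h h (pendI I) \<subseteq> res_h h X"
    using assms(3) unfolding gen_prescription_def by blast
  have PRH: "P \<subseteq> Rs I \<times> Hs I" and XRH: "X \<subseteq> Rs I \<times> Hs I" and PA: "P \<inter> propI I = {}"
    and Pfun: "\<forall>r h h'. (r, h) \<in> P \<longrightarrow> (r, h') \<in> P \<longrightarrow> h = h'"
    and Xt: "X \<subseteq> tentI I" and resPX: "res P \<inter> res (tentI I) \<subseteq> res X"
    using pb unfolding presc_base_def by auto
  have p5a: "\<And>h. h \<in> Hs I \<Longrightarrow> card (res_h h (P \<union> (tentI I - X))) \<le> quota I h"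
    using pb unfolding presc_base_def by blast
  have p5b: "\<And>h. h \<in> Hs I \<Longrightarrow> res_h h X \<noteq> {} \<Longrightarrow> card (res_h h (P \<union> (tentI I - X))) = quota I h"
    using pb unfolding presc_base_def by blast
  have finA: "finite A" unfolding A_def by (rule finite_AJ[OF v])
  have ARH: "A \<subseteq> Rs I \<times> Hs I" unfolding A_def by (rule AJ_sub[OF v])
  define \<sigma> where "\<sigma> = some_max I"
  have ms: "maximal_feasible I \<sigma>" unfolding \<sigma>_def using some_max_max finA A_def by blast
  then have fs: "feasible I \<sigma>" unfolding maximal_feasible_def by blast
  have ps: "props \<sigma> = A" using rm unfolding propI_def \<sigma>_def by simp
  define O1 where "O1 = {m. ousted I m A}"
  have rs: "rejs \<sigma> = O1" unfolding O1_def A_def by (rule rejs_max[OF ms ps[unfolded A_def]])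
  have tI: "tentI I = A - O1" unfolding tentI_def \<sigma>_def[symmetric] tents_def using ps rs by simp
  have pI: "pendI I = {(r,h). (r,h) \<in> A - O1 \<and> r \<notin> set (hpref I h)}"
    unfolding pendI_def \<sigma>_def[symmetric] pends_def tents_def using ps rs by auto
  have tuniq: "\<And>r h1 h2. (r,h1) \<in> tentI I \<Longrightarrow> (r,h2) \<in> tentI I \<Longrightarrow> h1 = h2"
    unfolding tentI_def \<sigma>_def[symmetric] using feas_tent_unique[OF fs] by blast
  define J where "J = newI I P X"
  have vJ: "valid_inst J" unfolding J_def by (rule valid_newI[OF v])
  have AJJ: "AJ J = A" unfolding J_def A_def by simp
  define \<tau> where "\<tau> = some_max J"
  have mt: "maximal_feasible J \<tau>" unfolding \<tau>_def using some_max_max finA AJJ by metis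
  then have ft: "feasible J \<tau>" unfolding maximal_feasible_def by blast
  have "set \<sigma> \<subseteq> set \<tau>" using main_sub[OF feas_transfer[OF fs v] mt[unfolded J_def]] .
  then have "props \<sigma> \<subseteq> props \<tau>" by (auto simp: props_def)
  then have pt: "props \<tau> = A" using feas_props[OF ft] AJJ ps by auto
  define O2 where "O2 = {m. ousted J m A}"
  have rt: "rejI J = O2" unfolding rejI_def \<tau>_def[symmetric] O2_def
    using rejs_max[OF mt] pt AJJ by simp
  have tJ: "tentI J = A - O2" unfolding tentI_def \<tau>_def[symmetric] tents_def using pt rt
    unfolding rejI_def \<tau>_def[symmetric] by simp
  have propJ: "propI J = A" unfolding propI_def \<tau>_def[symmetric] using pt .
  have O12: "O1 \<subseteq> O2" unfolding O1_def O2_def J_def using ousted_transfer[OF v] A_def by blast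
  have JS: "Rs J = Rs I" "Hs J = Hs I" "quota J = quota I" "rpref J = rpref I" "hpref J = NP I P X"
    unfolding J_def by simp_all
  have PA': "\<And>r h. (r,h) \<in> P \<Longrightarrow> (r,h) \<notin> A" using PA rm by auto
  have tA: "tentI I \<subseteq> A" using tI by auto
  have N1: "(r,h) \<notin> O2" if h: "h \<in> Hs I" and xh: "res_h h X \<noteq> {}" and rT: "(r,h) \<in> tentI I"
    and rx: "(r,h) \<notin> X" for r h
  proof
    assume "(r,h) \<in> O2"
    then have oJ: "ousted J (r,h) A" by (simp add: O2_def)
    note F = NP_facts[OF v h]
    let ?L = "hpref I h" and ?l1 = "lst (S1 I P X h)" and ?l3 = "lst (S3 I P X h)"
    have L': "hpref J h = ?L @ ?l1 @ ?l3" using F(1) JS by simp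
    have dL': "distinct (hpref J h)" "set (hpref J h) = Rs I" using F(2,3) JS by simp_all
    have rA: "(r,h) \<in> A" using rT tI by auto
    have rR: "r \<in> Rs I" using rA ARH by auto
    have cq: "card (res_h h (P \<union> (tentI I - X))) = quota I h" using p5b h xh by blast
    have big: "card {r' \<in> res_h h A. precedes (hpref J h) r' r} \<ge> quota I h"
      using oJ rR dL'(2) JS(3) unfolding ousted_def by auto
    show False
    proof (cases "card (set ?L \<inter> res_h h A) \<ge> quota I h")
      case True
      have "(r,h) \<notin> O1" using rT tI by auto
      then have nO: "\<not> ousted I (r,h) A" by (simp add: O1_def)
      have rL: "r \<in> set ?L" using nO True rA unfolding ousted_def by auto
      have small: "card {r' \<in> res_h h A. precedes ?L r' r} < quota I h"
        using nO True rA rL unfolding ousted_def by auto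
      have "{r' \<in> res_h h A. precedes (hpref J h) r' r} = {r' \<in> res_h h A. precedes ?L r' r}"
        using prec_app_left_iff[of ?L "?l1 @ ?l3" r] dL'(1) L' rL by auto
      then show False using small big by simp
    next
      case False
      have noO1: "\<And>r'. r' \<in> res_h h A \<Longrightarrow> (r',h) \<notin> O1"
        using False unfolding O1_def ousted_def by auto
      have rS1: "x \<in> set (?L @ ?l1)" if "(x,h) \<in> P \<or> ((x,h) \<in> tentI I \<and> (x,h) \<notin> X)" for x
      proof -
        have "x \<in> Rs I" using that PRH tA ARH by auto
        then show ?thesis using that F(4) unfolding S1_def by (auto simp: res_h_def)
      qed
      have nS1: "x \<in> set ?l3" if "(x,h) \<in> X" "x \<notin> set ?L" for x
      proof -
        have "(x,h) \<in> A" using that Xt tA by auto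
        then have "x \<in> Rs I" "(x,h) \<notin> P" using ARH PA' by auto
        then show ?thesis using that F(4,5) unfolding S1_def S3_def by (auto simp: res_h_def)
      qed
      have sub: "{r' \<in> res_h h A. precedes (hpref J h) r' r} \<subseteq> res_h h (tentI I - X) - {r}"
      proof
        fix r' assume r': "r' \<in> {r' \<in> res_h h A. precedes (hpref J h) r' r}"
        then have r'A: "(r',h) \<in> A" and pr: "precedes (hpref J h) r' r" by (auto simp: res_h_def)
        have ne: "r' \<noteq> r" using prec_irrefl[OF dL'(1)] pr by auto
        have r'T: "(r',h) \<in> tentI I" using noO1[of r'] r'A tI by (auto simp: res_h_def)
        have "(r',h) \<notin> X"
        proof
          assume r'X: "(r',h) \<in> X"
          show False
          proof (cases "r' \<in> set ?L")
            case True
            then have xp: "(r',h) \<in> X - pendI I" using r'X pI by auto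
            then have nz: "res_h h (X - pendI I) \<noteq> {}" by (auto simp: res_h_def)
            have "(r,h) \<notin> pendI I" using p6b[OF h nz] rx by (auto simp: res_h_def)
            then have "r \<in> res_h h (P \<union> ((tentI I - pendI I) - X))" using rT rx by (auto simp: res_h_def)
            moreover have "r' \<in> res_h h (X - pendI I)" using xp by (simp add: res_h_def)
            ultimately have "precedes ?L r r'" using p6a h by blast
            then have "precedes (hpref J h) r r'" unfolding L' by (rule prec_app_left)
            then show False using prec_antisym[OF dL'(1) pr] by blast
          next
            case False
            have "r' \<in> set ?l3" using nS1 r'X False by blast
            moreover have "r \<in> set (?L @ ?l1)" using rS1 rT rx by blast
            ultimately have "precedes ((?L @ ?l1) @ ?l3) r r'" by (intro prec_app_cross)
            then have "precedes (hpref J h) r r'" unfolding L' by simp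
            then show False using prec_antisym[OF dL'(1) pr] by blast
          qed
        qed
        then show "r' \<in> res_h h (tentI I - X) - {r}" using r'T ne by (auto simp: res_h_def)
      qed
      have fin: "finite (res_h h (P \<union> (tentI I - X)))"
      proof (rule finite_subset)
        show "res_h h (P \<union> (tentI I - X)) \<subseteq> Rs I" using PRH tA ARH by (auto simp: res_h_def)
        show "finite (Rs I)" using v unfolding valid_inst_def by simp
      qed
      have "card {r' \<in> res_h h A. precedes (hpref J h) r' r} \<le> card (res_h h (tentI I - X) - {r})"
        by (rule card_mono[OF _ sub]) (rule finite_subset[OF _ fin], auto simp: res_h_def)
      also have "\<dots> < card (res_h h (P \<union> (tentI I - X)))"
        by (rule psubset_card_mono[OF fin]) (use rT rx in \<open>auto simp: res_h_def\<close>)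
      finally show False using cq big by simp
    qed
  qed
  have finR: "finite (Rs I)" using v unfolding valid_inst_def by simp
  have finRH: "\<And>h. finite (res_h h (P \<union> (tentI I - X)))"
  proof (rule finite_subset[OF _ finR])
    fix h show "res_h h (P \<union> (tentI I - X)) \<subseteq> Rs I" using PRH tA ARH by (auto simp: res_h_def)
  qed
  define Y where "Y = X - O2"
  have eqTY: "tentI J - Y = (tentI I - X) - O2" using tI tJ O12 by (auto simp: Y_def)
  have ext: "extension I J" unfolding extension_def JS using NP_facts(1)[OF v] by simp
  have hc: "hospital_complete J" unfolding hospital_complete_def JS using NP_facts(3)[OF v] by simp
  have rc: "resident_changeless I J" by (simp add: resident_changeless_def JS)
  have P5: "card (res_h h (P \<union> (tentI J - Y))) \<le> quota J h
        \<and> (res_h h Y \<noteq> {} \<longrightarrow> card (res_h h (P \<union> (tentI J - Y))) = quota J h)"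
    if h: "h \<in> Hs J" for h
  proof -
    have h': "h \<in> Hs I" using h JS by simp
    have sub: "res_h h (P \<union> (tentI J - Y)) \<subseteq> res_h h (P \<union> (tentI I - X))"
      unfolding eqTY by (auto simp: res_h_def)
    have le: "card (res_h h (P \<union> (tentI J - Y))) \<le> quota J h"
      using card_mono[OF finRH sub] p5a[OF h'] JS by simp
    moreover have "card (res_h h (P \<union> (tentI J - Y))) = quota J h" if yn: "res_h h Y \<noteq> {}"
    proof -
      have xn: "res_h h X \<noteq> {}" using yn by (auto simp: res_h_def Y_def)
      have "res_h h (P \<union> (tentI J - Y)) = res_h h (P \<union> (tentI I - X))"
        using sub N1[OF h' xn] unfolding eqTY by (auto simp: res_h_def)
      then show ?thesis using p5b[OF h' xn] JS by simp
    qed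
    ultimately show ?thesis by blast
  qed
  have resP: "res P \<inter> res (tentI J) \<subseteq> res Y"
  proof
    fix r assume "r \<in> res P \<inter> res (tentI J)"
    then obtain h where rP: "r \<in> res P" and rh: "(r,h) \<in> A - O2" using tJ by (auto simp: res_def)
    then have rhT: "(r,h) \<in> tentI I" using tI O12 by auto
    then have "r \<in> res X" using resPX rP by (auto simp: res_def)
    then obtain h2 where rh2: "(r,h2) \<in> X" by (auto simp: res_def)
    then have "h = h2" using tuniq[OF rhT] Xt by auto
    then show "r \<in> res Y" using rh rh2 by (auto simp: res_def Y_def)
  qed
  have P6: "precedes (hpref J h) a b"
    if h: "h \<in> Hs J" and a: "a \<in> res_h h (P \<union> (tentI J - Y))" and b: "b \<in> res_h h Y" for h a b
  proof -
    have h': "h \<in> Hs I" using h JS by simp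
    note F = NP_facts[OF v h']
    let ?L = "hpref I h" and ?l1 = "lst (S1 I P X h)" and ?l3 = "lst (S3 I P X h)"
    have L': "hpref J h = ?L @ ?l1 @ ?l3" using F(1) JS by simp
    have bX: "(b,h) \<in> X" using b by (auto simp: res_h_def Y_def)
    have aa: "(a,h) \<in> P \<or> ((a,h) \<in> tentI I \<and> (a,h) \<notin> X)" using a unfolding eqTY by (auto simp: res_h_def)
    show ?thesis
    proof (cases "b \<in> set ?L")
      case True
      then have xp: "(b,h) \<in> X - pendI I" using bX pI by auto
      then have nz: "res_h h (X - pendI I) \<noteq> {}" by (auto simp: res_h_def)
      have "a \<in> res_h h (P \<union> ((tentI I - pendI I) - X))"
        using aa p6b[OF h' nz] by (auto simp: res_h_def)
      moreover have "b \<in> res_h h (X - pendI I)" using xp by (simp add: res_h_def)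
      ultimately have "precedes ?L a b" using p6a h' by blast
      then show ?thesis unfolding L' by (rule prec_app_left)
    next
      case False
      have "(b,h) \<in> A" using bX Xt tA by auto
      then have "b \<in> Rs I" "(b,h) \<notin> P" using ARH PA' by auto
      then have b3: "b \<in> set ?l3" using False bX F(4,5) unfolding S1_def S3_def by (auto simp: res_h_def)
      have "a \<in> Rs I" using aa PRH tA ARH by auto
      then have "a \<in> set (?L @ ?l1)" using aa F(4) unfolding S1_def by (auto simp: res_h_def)
      then have "precedes ((?L @ ?l1) @ ?l3) a b" using b3 by (intro prec_app_cross)
      then show ?thesis unfolding L' by simp
    qed
  qed
  have pbJ: "presc_base J P Y"
    unfolding presc_base_def
  proof (intro conjI)
    show "P \<subseteq> Rs J \<times> Hs J" using PRH JS by simp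
    show "Y \<subseteq> Rs J \<times> Hs J" using XRH JS by (auto simp: Y_def)
    show "P \<inter> propI J = {}" using propJ PA' by auto
    show "\<forall>r h h'. (r, h) \<in> P \<longrightarrow> (r, h') \<in> P \<longrightarrow> h = h'" by (rule Pfun)
    show "Y \<subseteq> tentI J" using tJ Xt tA by (auto simp: Y_def)
    show "res P \<inter> res (tentI J) \<subseteq> res Y" by (rule resP)
    show "\<forall>h\<in>Hs J. card (res_h h (P \<union> (tentI J - Y))) \<le> quota J h
        \<and> (res_h h Y \<noteq> {} \<longrightarrow> card (res_h h (P \<union> (tentI J - Y))) = quota J h)"
      using P5 by blast
  qed
  have rmJ: "resident_minimal J" unfolding resident_minimal_def using propJ AJJ by (simp add: AJ_def)
  have "prescription J P Y" unfolding prescription_def using rmJ hc pbJ P6 by blast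
  then have "prescription J P (X - rejI J)" using rt by (simp add: Y_def)
  then show ?thesis using vJ ext rc hc by blast
qed

end
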